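(* Let $X$ be a finite set. For every preference relation $\trianglerighteq$ over $2^X$ there exist a state space $S=S^+\cup S^-$ with $S^+\cap S^-=\emptyset$ and $|S|\le 2(2^{|X|}-1)$, and a function $U:X\times S\to\mathbb{R}$, such that $$V(A)=\sum_{s\in S^+}\max_{a\in A} U(a,s)-\sum_{s\in S^-}\max_{a\in A} U(a,s)$$ represents $\trianglerighteq$, i.e. $A\trianglerighteq B$ if and only if $V(A)\ge V(B)$.
   Context: A preference relation over $2^X$ (the set of menus) is a complete and transitive binary relation on $2^X$. *)

theory Defs
  imports Complex_Main
begin

text \<open>Menus: nonempty subsets of the finite set X (max over an empty menu is undefined).\<close>
definition menus :: "'a set \<Rightarrow> 'a set set" where
  "menus X = {A. A \<subseteq> X \<and> A \<noteq> {}}"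

definition preference_relation :: "'a set \<Rightarrow> ('a set \<Rightarrow> 'a set \<Rightarrow> bool) \<Rightarrow> bool" where
  "preference_relation X R \<longleftrightarrow>
     (\<forall>A\<in>menus X. \<forall>B\<in>menus X. R A B \<or> R B A) \<and>
     (\<forall>A\<in>menus X. \<forall>B\<in>menus X. \<forall>C\<in>menus X. R A B \<longrightarrow> R B C \<longrightarrow> R A C)"

definition menu_value :: "'s set \<Rightarrow> 's set \<Rightarrow> ('a \<Rightarrow> 's \<Rightarrow> real) \<Rightarrow> 'a set \<Rightarrow> real" where
  "menu_value Sp Sm U A =
     (\<Sum>s\<in>Sp. Max ((\<lambda>a. U a s) ` A)) - (\<Sum>s\<in>Sm. Max ((\<lambda>a. U a s) ` A))"

end

theory Submission
  imports Defs
begin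

definition Ssum :: "'a set \<Rightarrow> ('a set \<Rightarrow> real) \<Rightarrow> 'a set \<Rightarrow> real" where
  "Ssum X c A = sum c {B\<in>menus X. A \<subseteq> B}"

lemma menus_finite: "finite X \<Longrightarrow> finite (menus X)"
  unfolding menus_def by auto

lemma card_menus: "finite X \<Longrightarrow> card (menus X) = 2 ^ card X - 1"
proof -
  assume f: "finite X"
  have "menus X = Pow X - {{}}" unfolding menus_def by auto
  moreover have "card (Pow X - {{}}) = card (Pow X) - 1" using f by (intro card_Diff_singleton) auto
  ultimately show ?thesis using f by (simp only: card_Pow)
qed

lemma tri_step:
  fixes v :: "'a set \<Rightarrow> real"
  assumes fin: "finite X"
  shows "\<exists>c. \<forall>A\<in>menus X. card X < card A + n \<longrightarrow> v A = Ssum X c A"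
proof (induction n)
  case 0
  have "\<forall>A\<in>menus X. card A \<le> card X" using fin unfolding menus_def by (auto intro: card_mono)
  then show ?case by fastforce
next
  case (Suc n)
  then obtain c where c: "\<forall>A\<in>menus X. card X < card A + n \<longrightarrow> v A = Ssum X c A" by blast
  define c' where "c' B = (if card B + n = card X then v B - sum c {C\<in>menus X. B \<subset> C} else c B)" for B
  have fm: "finite (menus X)" using fin by (rule menus_finite)
  have cardlt: "card A < card B" if "B \<in> menus X" "A \<subset> B" for A B
  proof -
    have "finite B" using that fin unfolding menus_def by (auto intro: finite_subset)
    then show ?thesis using that psubset_card_mono by blast
  qed
  have cardle: "card A \<le> card B" if "B \<in> menus X" "A \<subseteq> B" for A B
  proof -
    have "finite B" using that fin unfolding menus_def by (auto intro: finite_subset)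
    then show ?thesis using that card_mono by blast
  qed
  show ?case
  proof (intro exI ballI impI)
    fix A assume A: "A \<in> menus X" "card X < card A + Suc n"
    show "v A = Ssum X c' A"
    proof (cases "card X < card A + n")
      case True
      have "Ssum X c' A = Ssum X c A" unfolding Ssum_def
      proof (rule sum.cong)
        fix B assume "B \<in> {B \<in> menus X. A \<subseteq> B}"
        then have "card A \<le> card B" using cardle by auto
        then show "c' B = c B" using True unfolding c'_def by auto
      qed simp
      then show ?thesis using c A True by simp
    next
      case False
      then have eq: "card A + n = card X" using A by simp
      have split: "{B \<in> menus X. A \<subseteq> B} = insert A {B \<in> menus X. A \<subset> B}" using A(1) by auto
      have "sum c' {B \<in> menus X. A \<subset> B} = sum c {B \<in> menus X. A \<subset> B}"
      proof (rule sum.cong)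
        fix B assume "B \<in> {B \<in> menus X. A \<subset> B}"
        then have "card A < card B" using cardlt by auto
        then show "c' B = c B" using eq unfolding c'_def by auto
      qed simp
      moreover have "finite {B \<in> menus X. A \<subset> B}" using fm by simp
      ultimately show ?thesis unfolding Ssum_def split using eq by (simp add: c'_def)
    qed
  qed
qed

lemma tri:
  fixes v :: "'a set \<Rightarrow> real"
  assumes fin: "finite X"
  shows "\<exists>c. \<forall>A\<in>menus X. v A = Ssum X c A"
proof -
  obtain c where c: "\<forall>A\<in>menus X. card X < card A + Suc (card X) \<longrightarrow> v A = Ssum X c A"
    using tri_step[OF fin] by blast
  then show ?thesis by auto
qed

lemma max_lemma:
  fixes k :: real
  assumes "finite A" "A \<noteq> {}" "k \<ge> 0"
  shows "Max ((\<lambda>a. if P \<or> a \<notin> B then k else 0) ` A) = (if P \<or> \<not> A \<subseteq> B then k else 0)"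
proof (cases "P \<or> \<not> A \<subseteq> B")
  case True
  then obtain a where "a \<in> A" "P \<or> a \<notin> B" using assms(2) by blast
  then have "k \<in> (\<lambda>a. if P \<or> a \<notin> B then k else 0) ` A" by force
  moreover have "\<forall>y\<in>(\<lambda>a. if P \<or> a \<notin> B then k else 0) ` A. y \<le> k" using assms(3) by auto
  ultimately show ?thesis using True assms by (intro Max_eqI) auto
next
  case False
  then have "(\<lambda>a. if P \<or> a \<notin> B then k else 0) ` A = {0}" using assms(2) by auto
  then show ?thesis using False by simp
qed

theorem corollary7:
  fixes X :: "'a set" and R :: "'a set \<Rightarrow> 'a set \<Rightarrow> bool"
  assumes "finite X"
    and "preference_relation X R"
  shows "\<exists>(Sp :: nat set) (Sm :: nat set) (U :: 'a \<Rightarrow> nat \<Rightarrow> real).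
           finite (Sp \<union> Sm) \<and> Sp \<inter> Sm = {} \<and>
           card (Sp \<union> Sm) \<le> 2 * (2 ^ card X - 1) \<and>
           (\<forall>A\<in>menus X. \<forall>B\<in>menus X.
              R A B \<longleftrightarrow> menu_value Sp Sm U A \<ge> menu_value Sp Sm U B)"
proof -
  have fm: "finite (menus X)" using assms(1) by (rule menus_finite)
  have compl: "\<And>A B. A \<in> menus X \<Longrightarrow> B \<in> menus X \<Longrightarrow> R A B \<or> R B A"
    and trans: "\<And>A B C. A \<in> menus X \<Longrightarrow> B \<in> menus X \<Longrightarrow> C \<in> menus X \<Longrightarrow> R A B \<Longrightarrow> R B C \<Longrightarrow> R A C"
    using assms(2) unfolding preference_relation_def by blast+
  define v where "v A = real (card {C\<in>menus X. R A C})" for A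
  have vrep: "R A B \<longleftrightarrow> v A \<ge> v B" if A: "A \<in> menus X" and B: "B \<in> menus X" for A B
  proof
    assume ab: "R A B"
    have "{C\<in>menus X. R B C} \<subseteq> {C\<in>menus X. R A C}"
    proof
      fix C assume "C \<in> {C\<in>menus X. R B C}"
      then have "C \<in> menus X" "R B C" by auto
      then show "C \<in> {C\<in>menus X. R A C}" using trans[OF A B _ ab] by simp
    qed
    then have "card {C\<in>menus X. R B C} \<le> card {C\<in>menus X. R A C}"
      by (intro card_mono) (use fm in simp_all)
    then show "v A \<ge> v B" unfolding v_def by simp
  next
    assume le: "v A \<ge> v B"
    show "R A B"
    proof (rule ccontr)
      assume n: "\<not> R A B"
      then have ba: "R B A" using compl[OF A B] by simp
      have sub: "{C\<in>menus X. R A C} \<subseteq> {C\<in>menus X. R B C}"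
      proof
        fix C assume "C \<in> {C\<in>menus X. R A C}"
        then have "C \<in> menus X" "R A C" by auto
        then show "C \<in> {C\<in>menus X. R B C}" using trans[OF B A _ ba] by simp
      qed
      have "R B B" using compl[OF B B] by simp
      then have "B \<in> {C\<in>menus X. R B C}" "B \<notin> {C\<in>menus X. R A C}" using B n by auto
      then have "{C\<in>menus X. R A C} \<subset> {C\<in>menus X. R B C}" using sub by blast
      moreover have "finite {C\<in>menus X. R B C}" using fm by simp
      ultimately have "card {C\<in>menus X. R A C} < card {C\<in>menus X. R B C}"
        by (rule psubset_card_mono[rotated])
      then show False using le unfolding v_def by simp
    qed
  qed
  obtain c where c: "\<forall>A\<in>menus X. v A = Ssum X c A" using tri[OF assms(1)] by blast
  define N where "N = card (menus X)"
  obtain f where f: "bij_betw f {0..<N} (menus X)" unfolding N_def using ex_bij_betw_nat_finite[OF fm] by blast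
  define Up where "Up B a = (if c B \<ge> 0 \<or> a \<notin> B then \<bar>c B\<bar> else 0)" for B a
  define Um where "Um B a = (if c B < 0 \<or> a \<notin> B then \<bar>c B\<bar> else 0)" for B a
  define U where "U a i = (if i < N then Up (f i) a else Um (f (i - N)) a)" for a i
  have mv: "menu_value {0..<N} {N..<2*N} U A = Ssum X c A" if A: "A \<in> menus X" for A
  proof -
    have finA: "finite A" "A \<noteq> {}" using A assms(1) unfolding menus_def by (auto intro: finite_subset)
    have s2: "(\<Sum>s\<in>{N..<2*N}. Max ((\<lambda>a. U a s) ` A)) = (\<Sum>i\<in>{0..<N}. Max ((\<lambda>a. Um (f i) a) ` A))"
    proof -
      have "(\<Sum>s\<in>{N..<2*N}. Max ((\<lambda>a. U a s) ` A)) = (\<Sum>s\<in>{0+N..<N+N}. Max ((\<lambda>a. U a s) ` A))" by (simp add: mult_2)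
      also have "\<dots> = (\<Sum>i\<in>{0..<N}. Max ((\<lambda>a. U a (i+N)) ` A))" by (rule sum.shift_bounds_nat_ivl)
      finally show ?thesis unfolding U_def by simp
    qed
    have s1: "(\<Sum>s\<in>{0..<N}. Max ((\<lambda>a. U a s) ` A)) = (\<Sum>i\<in>{0..<N}. Max ((\<lambda>a. Up (f i) a) ` A))"
      unfolding U_def by simp
    have key: "Max ((\<lambda>a. Up B a) ` A) - Max ((\<lambda>a. Um B a) ` A) = (if A \<subseteq> B then c B else 0)" for B
      unfolding Up_def Um_def using max_lemma[OF finA, of "\<bar>c B\<bar>" "c B \<ge> 0" B] max_lemma[OF finA, of "\<bar>c B\<bar>" "c B < 0" B]
      by auto
    have "menu_value {0..<N} {N..<2*N} U A = (\<Sum>i\<in>{0..<N}. (if A \<subseteq> f i then c (f i) else 0))"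
      unfolding menu_value_def s1 s2 sum_subtractf[symmetric] key by simp
    also have "\<dots> = (\<Sum>B\<in>menus X. (if A \<subseteq> B then c B else 0))"
      using sum.reindex_bij_betw[OF f, of "\<lambda>B. if A \<subseteq> B then c B else 0"] by simp
    also have "\<dots> = Ssum X c A" unfolding Ssum_def using fm by (simp add: sum.inter_filter)
    finally show ?thesis .
  qed
  show ?thesis
  proof (intro exI conjI)
    show "finite ({0..<N} \<union> {N..<2*N})" by simp
    show "{0..<N} \<inter> {N..<2*N} = {}" by auto
    have "{0..<N} \<union> {N..<2*N} = {0..<2*N}" by auto
    then show "card ({0..<N} \<union> {N..<2*N}) \<le> 2 * (2 ^ card X - 1)"
      using card_menus[OF assms(1)] N_def by simp
    show "\<forall>A\<in>menus X. \<forall>B\<in>menus X. R A B = (menu_value {0..<N} {N..<2*N} U B \<le> menu_value {0..<N} {N..<2*N} U A)"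
    proof (intro ballI)
      fix A B assume A: "A \<in> menus X" and B: "B \<in> menus X"
      have "menu_value {0..<N} {N..<2*N} U A = v A" using mv[OF A] c A by simp
      moreover have "menu_value {0..<N} {N..<2*N} U B = v B" using mv[OF B] c B by simp
      ultimately show "R A B = (menu_value {0..<N} {N..<2*N} U B \<le> menu_value {0..<N} {N..<2*N} U A)"
        using vrep[OF A B] by simp
    qed
  qed
qed

end
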